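(* Let $M\in\mathbb{R}^{p\times q}$ have rank $k\ge1$. Then there exist $A\in\mathbb{R}^{k\times p}$ and $B\in\mathbb{R}^{k\times q}$ with $M=A^TB$ such that every column of $A$ and every column of $B$ has Euclidean norm at most $k^{1/4}\sqrt{\|M\|_\infty}$.
   Context: $\|M\|_\infty$ denotes the maximum absolute value of an entry of $M$. *)

theory Defs
  imports "HOL-Analysis.Analysis"
begin

definition max_entry_norm :: "real^'q^'p \<Rightarrow> real" where
  "max_entry_norm M = Max (range (\<lambda>(i,j). \<bar>M $ i $ j\<bar>))"

end

theory Submission
  imports Defs
begin

lemma diag_mult:
  fixes d :: "'k::finite \<Rightarrow> real"
  shows "(\<chi> r s. if r = s then d r else 0) *v x = (\<chi> r. d r * x $ r)"
  proof -
  have "\<And>i j. (if i = j then d i else 0) * x $ j = (if i = j then d i * x $ i else 0)" by simp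
  then show ?thesis by (simp add: matrix_vector_mult_def vec_eq_iff)
qed

lemma diag_det:
  fixes d :: "'k::finite \<Rightarrow> real"
  shows "det (\<chi> r s. if r = s then d r else 0) = prod d UNIV"
  by (subst det_diagonal) auto

lemma norm_sq_vec: "(norm (x::real^'k))^2 = (\<Sum>r\<in>UNIV. (x$r)^2)"
  by (simp add: norm_vec_def L2_set_def sum_nonneg)

lemma key_diag:
  fixes a :: "'p::finite \<Rightarrow> real^'k::finite"
  assumes P: "\<And>S::real^'k^'k. (\<forall>i. norm (S *v a i) \<le> 1) \<Longrightarrow> \<bar>det S\<bar> \<le> 1"
    and nrm: "\<And>i. norm (a i) \<le> 1"
  shows "\<exists>i. (a i $ k0)^2 \<ge> 1 / real CARD('k)"
proof (rule ccontr)
  assume "\<not> ?thesis"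
  hence lt: "\<And>i. (a i $ k0)^2 < 1 / real CARD('k)" by (meson not_le)
  define n where "n = real CARD('k)"
  have n1: "n \<ge> 1" unfolding n_def using card_ge_0_finite[of "UNIV::'k set"] by simp
  define m where "m = Max (range (\<lambda>i. (a i $ k0)^2))"
  have "m \<in> range (\<lambda>i. (a i $ k0)^2)" unfolding m_def by (rule Max_in) auto
  hence mlt: "m < 1/n" using lt n_def by auto
  have mge: "\<And>i. (a i $ k0)^2 \<le> m" unfolding m_def by (rule Max_ge) auto
  define \<delta> where "\<delta> = max (1/(2*n)) m"
  have \<delta>lt: "\<delta> < 1/n" using mlt n1 by (auto simp: \<delta>_def field_simps)
  have \<delta>pos: "\<delta> > 0" using n1 unfolding \<delta>_def by (smt (verit) divide_pos_pos)
  have c\<delta>: "\<And>i. (a i $ k0)^2 \<le> \<delta>" using mge unfolding \<delta>_def by (meson max.coboundedI2)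
  have n\<delta>: "n*\<delta> < 1" using \<delta>lt n1 by (simp add: field_simps)
  define L where "L = (1-\<delta>)/\<delta>"
  define D where "D = L - (n-1)"
  have DL: "D = (1 - n*\<delta>)/\<delta>" unfolding D_def L_def using \<delta>pos by (simp add: field_simps)
  have Dpos: "D > 0" unfolding DL using n\<delta> \<delta>pos by simp
  have DleL: "D \<le> L" unfolding D_def using n1 by simp
  have Lpos: "L > 0" using Dpos DleL by simp
  define \<epsilon> where "\<epsilon> = D/(2*n*L)"
  have epos: "\<epsilon> > 0" unfolding \<epsilon>_def using Dpos Lpos n1 by simp
  have "\<epsilon> \<le> L/(2*n*L)" unfolding \<epsilon>_def by (rule divide_right_mono) (use DleL Lpos n1 in auto)
  also have "\<dots> = 1/(2*n)" using Lpos by simp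
  also have "\<dots> \<le> 1/2" using n1 by (simp add: field_simps)
  finally have ehalf: "\<epsilon> \<le> 1/2" .
  define p where "p = sqrt (1-\<epsilon>)"
  define q where "q = sqrt (1+\<epsilon>*L)"
  have p2: "p^2 = 1-\<epsilon>" unfolding p_def using ehalf by simp
  have q2: "q^2 = 1+\<epsilon>*L" unfolding q_def using epos Lpos by simp
  define d where "d = (\<lambda>r. if r = k0 then q else p)"
  define S :: "real^'k^'k" where "S = (\<chi> r s. if r = s then d r else 0)"
  have Sn: "norm (S *v a i) \<le> 1" for i
  proof -
    have "(norm (S *v a i))^2 = (\<Sum>r\<in>UNIV. (d r * a i $ r)^2)" by (simp add: S_def diag_mult norm_sq_vec)
    also have "\<dots> = (\<Sum>r\<in>UNIV. (1-\<epsilon>) * (a i $ r)^2 + (if r = k0 then (\<epsilon>+\<epsilon>*L)*(a i $ r)^2 else 0))"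
      by (rule sum.cong) (auto simp: d_def power_mult_distrib p2 q2 algebra_simps)
    also have "\<dots> = (1-\<epsilon>)*(norm (a i))^2 + (\<epsilon>+\<epsilon>*L)*(a i$k0)^2"
      by (simp add: sum.distrib sum_distrib_left norm_sq_vec)
    also have "(\<epsilon>+\<epsilon>*L) = \<epsilon>/\<delta>" unfolding L_def using \<delta>pos by (simp add: field_simps)
    also have "(1-\<epsilon>)*(norm (a i))^2 + \<epsilon>/\<delta>*(a i$k0)^2 \<le> (1-\<epsilon>)*1 + \<epsilon>/\<delta>*\<delta>"
    proof (rule add_mono)
      have "(norm (a i))^2 \<le> 1" using nrm[of i] by (simp add: power_le_one)
      then show "(1-\<epsilon>)*(norm (a i))^2 \<le> (1-\<epsilon>)*1" using ehalf by (intro mult_left_mono) auto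
      show "\<epsilon>/\<delta>*(a i$k0)^2 \<le> \<epsilon>/\<delta>*\<delta>" using c\<delta>[of i] epos \<delta>pos by (intro mult_left_mono) auto
    qed
    also have "\<dots> = 1" using \<delta>pos by simp
    finally have "(norm (S *v a i))^2 \<le> 1^2" by simp
    then show ?thesis by (rule power2_le_imp_le) simp
  qed
  hence dS: "\<bar>det S\<bar> \<le> 1" using P by blast
  have "det S = prod d UNIV" by (simp add: S_def diag_det)
  also have "\<dots> = d k0 * prod d (UNIV - {k0})" by (simp add: prod.remove)
  also have "prod d (UNIV - {k0}) = prod (\<lambda>_. p) (UNIV - {k0})" by (rule prod.cong) (auto simp: d_def)
  also have "\<dots> = p ^ (CARD('k) - 1)" by (simp add: card_Diff_singleton)
  finally have detS: "det S = q * p ^ (CARD('k) - 1)" by (simp add: d_def)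
  have "(det S)^2 = (1+\<epsilon>*L) * (1-\<epsilon>)^(CARD('k) - 1)"
    unfolding detS by (simp add: power_mult_distrib q2 flip: p2 power_mult) (simp add: power_mult mult.commute)
  moreover have "1 + real (CARD('k) - 1) * (-\<epsilon>) \<le> (1 + (-\<epsilon>))^(CARD('k) - 1)"
    using ehalf by (intro Bernoulli_inequality) simp
  moreover have "real (CARD('k) - 1) = n - 1" unfolding n_def using card_ge_0_finite[of "UNIV::'k set"] by (simp add: of_nat_diff)
  ultimately have "(det S)^2 \<ge> (1+\<epsilon>*L) * (1 - (n-1)*\<epsilon>)"
    using epos Lpos by (simp add: mult_left_mono)
  also have "(1+\<epsilon>*L) * (1 - (n-1)*\<epsilon>) = 1 + \<epsilon>*D - \<epsilon>*((n-1)*L*\<epsilon>)"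
    unfolding D_def by (simp add: algebra_simps)
  also have "(n-1)*L*\<epsilon> = (n-1)*D/(2*n)" unfolding \<epsilon>_def using Lpos n1 by (simp add: field_simps)
  finally have ge: "(det S)^2 \<ge> 1 + \<epsilon>*D - \<epsilon>*((n-1)*D/(2*n))" .
  have "(n-1)*D/(2*n) \<le> D/2" using n1 Dpos by (simp add: field_simps)
  hence "\<epsilon>*((n-1)*D/(2*n)) \<le> \<epsilon>*(D/2)" using epos by (intro mult_left_mono) auto
  hence "(det S)^2 \<ge> 1 + \<epsilon>*D - \<epsilon>*(D/2)" using ge by linarith
  moreover have "\<epsilon>*D > 0" using epos Dpos by simp
  moreover have "(det S)^2 \<le> 1" using dS by (simp add: abs_square_le_1)
  ultimately show False by (simp add: mult.commute)
qed

lemma key_gen: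
  fixes a :: "'p::finite \<Rightarrow> real^'k::finite"
  assumes P: "\<And>S::real^'k^'k. (\<forall>i. norm (S *v a i) \<le> 1) \<Longrightarrow> \<bar>det S\<bar> \<le> 1"
    and nrm: "\<And>i. norm (a i) \<le> 1"
    and u: "norm u = 1"
  shows "\<exists>i. (a i \<bullet> u)^2 \<ge> 1 / real CARD('k)"
proof -
  obtain k0 :: 'k where True by simp
  have nu: "norm u = norm (axis k0 (1::real))" using u by simp
  obtain f where f: "orthogonal_transformation f" "f u = axis k0 (1::real)"
    using orthogonal_transformation_exists[OF nu] by blast
  define R where "R = matrix f"
  have Rf: "\<And>x. R *v x = f x" unfolding R_def
    using matrix_vector_mul(2)[OF orthogonal_transformation_linear[OF f(1)]] by (rule fun_cong)
  have dR: "\<bar>det R\<bar> = 1" unfolding R_def by (rule orthogonal_transformation_det[OF f(1)])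
  define a' where "a' = (\<lambda>i. R *v a i)"
  have P': "\<bar>det S\<bar> \<le> 1" if "\<forall>i. norm (S *v a' i) \<le> 1" for S :: "real^'k^'k"
  proof -
    have "\<forall>i. norm ((S ** R) *v a i) \<le> 1" using that unfolding a'_def by (metis matrix_vector_mul_assoc)
    hence "\<bar>det (S ** R)\<bar> \<le> 1" by (rule P)
    thus ?thesis by (simp add: det_mul abs_mult dR)
  qed
  have n': "\<And>i. norm (a' i) \<le> 1" using nrm unfolding a'_def Rf by (metis orthogonal_transformation_norm[OF f(1)])
  obtain i where i: "(a' i $ k0)^2 \<ge> 1 / real CARD('k)" using key_diag[of a' k0] P' n' by blast
  have "a' i $ k0 = a i \<bullet> u"
  proof -
    have "a' i $ k0 = f (a i) \<bullet> f u" unfolding a'_def Rf by (subst f(2)) (rule cart_eq_inner_axis)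
    also have "\<dots> = a i \<bullet> u" using f(1) unfolding orthogonal_transformation_def by blast
    finally show ?thesis .
  qed
  thus ?thesis using i by auto
qed

lemma mv_column_sum:
  fixes X :: "real^'n^'m"
  shows "X *v y = (\<Sum>i\<in>UNIV. y$i *\<^sub>R column i X)"
  by (simp add: vec_eq_iff matrix_vector_mult_def column_def mult.commute)

lemma rank_factor:
  fixes M :: "real^'q^'p"
  assumes "CARD('k) = rank M"
  shows "\<exists>(A0 :: real^'p^'k) (B0 :: real^'q^'k). M = transpose A0 ** B0"
proof -
  have sV: "subspace (range (\<lambda>x. M *v x))"
    using linear_subspace_image[OF matrix_vector_mul_linear[of M] subspace_UNIV] by simp
  have dV: "dim (UNIV :: (real^'k) set) = dim (range (\<lambda>x. M *v x))"
    using assms by (simp add: rank_dim_range)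
  obtain f :: "real^'k \<Rightarrow> real^'p" where f: "linear f" "f ` UNIV = range (\<lambda>x. M *v x)" "inj_on f UNIV"
    using subspace_isomorphism[OF subspace_UNIV sV dV] by blast
  obtain g where g: "linear g" "g \<circ> f = id" using linear_injective_left_inverse[OF f(1)] f(3) by blast
  define C where "C = matrix f"
  define B0 where "B0 = matrix (g \<circ> (\<lambda>x. M *v x))"
  have lg: "linear (g \<circ> (\<lambda>x. M *v x))" using g(1) by (simp add: linear_compose matrix_vector_mul_linear)
  have "M = C ** B0"
  proof (rule matrix_eq[THEN iffD2], intro allI)
    fix x
    obtain y where y: "M *v x = f y" using f(2) by (metis rangeI image_iff)
    have "(C ** B0) *v x = f (g (M *v x))"
      using matrix_vector_mul(2)[OF lg]
      by (simp add: C_def B0_def flip: matrix_vector_mul_assoc add: matrix_vector_mul(2)[OF f(1)])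
    also have "\<dots> = M *v x" using g(2) y by (metis comp_apply id_apply)
    finally show "M *v x = (C ** B0) *v x" by simp
  qed
  hence "M = transpose (transpose C) ** B0" by simp
  thus ?thesis by blast
qed

lemma cont_mv: "continuous_on S (\<lambda>T::real^'n^'m. T *v c)"
  unfolding matrix_vector_mult_def by (intro continuous_intros)

lemma cont_det: "continuous_on S (\<lambda>T::real^'n^'n. \<bar>det T\<bar>)"
  unfolding det_def by (intro continuous_intros)

theorem corollary6p6:
  fixes M :: "real^'q^'p"
  assumes "rank M \<ge> 1"
    and "CARD('k) = rank M"
  shows "\<exists>(A :: real^'p^'k) (B :: real^'q^'k).
           M = transpose A ** B \<and>
           (\<forall>j. norm (column j A) \<le> real CARD('k) powr (1/4) * sqrt (max_entry_norm M)) \<and>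
           (\<forall>j. norm (column j B) \<le> real CARD('k) powr (1/4) * sqrt (max_entry_norm M))"
proof -
  define m where "m = max_entry_norm M"
  define n where "n = real CARD('k)"
  have n1: "n \<ge> 1" unfolding n_def using card_ge_0_finite[of "UNIV::'k set"] by simp
  have mge: "\<bar>M $ i $ j\<bar> \<le> m" for i j
    unfolding m_def max_entry_norm_def by (rule Max_ge) auto
  have "M \<noteq> 0" using assms(1) rank_eq_0[of M] by auto
  then obtain i0 j0 where "M $ i0 $ j0 \<noteq> 0" by (metis vec_eq_iff zero_index)
  hence mpos: "m > 0" using mge[of i0 j0] by simp
  obtain A0 :: "real^'p^'k" and B0 :: "real^'q^'k" where MAB: "M = transpose A0 ** B0"
    using rank_factor[OF assms(2)] by blast
  have "rank M \<le> rank (transpose A0)" unfolding MAB by (rule rank_mul_le_left)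
  hence "rank A0 = CARD('k)" using assms(2) rank_bound[of A0] by (simp add: rank_transpose)
  hence surjA: "surj ((*v) A0)" by (simp add: full_rank_surjective)
  define c where "c = (\<lambda>i. column i A0)"
  define b where "b = (\<lambda>j. column j B0)"
  have Mc: "M $ i $ j = c i \<bullet> b j" for i j
    unfolding MAB c_def b_def by (simp add: matrix_matrix_mult_def transpose_def column_def inner_vec_def)
  have "\<forall>s. \<exists>x. A0 *v x = axis s 1" using surjA unfolding surj_def by (metis)
  then obtain y where y: "\<And>s. A0 *v y s = axis s 1" by metis
  define F where "F = {T :: real^'k^'k. \<forall>i. norm (T *v c i) \<le> 1}"
  have entry: "\<bar>T $ r $ s\<bar> \<le> (\<Sum>i\<in>UNIV. \<bar>y s $ i\<bar>)" if "T \<in> F" for T r s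
  proof -
    have "\<bar>T $ r $ s\<bar> = \<bar>(T *v axis s 1) $ r\<bar>" by (simp add: matrix_vector_mult_basis column_def)
    also have "\<dots> \<le> norm (T *v axis s 1)" by (rule component_le_norm_cart)
    also have "T *v axis s 1 = (\<Sum>i\<in>UNIV. y s $ i *\<^sub>R (T *v c i))"
      unfolding y[symmetric] matrix_vector_mul_assoc mv_column_sum[of "T ** A0"] c_def
      by (simp add: column_def matrix_vector_mult_def matrix_matrix_mult_def vec_eq_iff sum_distrib_left)
    also have "norm \<dots> \<le> (\<Sum>i\<in>UNIV. norm (y s $ i *\<^sub>R (T *v c i)))" by (rule norm_sum)
    also have "\<dots> \<le> (\<Sum>i\<in>UNIV. \<bar>y s $ i\<bar>)"
    proof (rule sum_mono)
      fix i show "norm (y s $ i *\<^sub>R (T *v c i)) \<le> \<bar>y s $ i\<bar>"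
        using that unfolding F_def by (simp add: mult_left_le)
    qed
    finally show ?thesis .
  qed
  define K where "K = (\<Sum>r\<in>(UNIV::'k set). \<Sum>s\<in>(UNIV::'k set). \<Sum>i\<in>UNIV. \<bar>y s $ i\<bar>)"
  have bF: "bounded F" unfolding bounded_iff
  proof (intro exI ballI)
    fix T assume T: "T \<in> F"
    have "norm T \<le> (\<Sum>r\<in>UNIV. norm (T$r))" unfolding norm_vec_def by (rule L2_set_le_sum) simp
    also have "\<dots> \<le> (\<Sum>r\<in>UNIV. \<Sum>s\<in>UNIV. \<bar>T$r$s\<bar>)" by (intro sum_mono norm_le_l1_cart)
    also have "\<dots> \<le> K" unfolding K_def by (intro sum_mono entry[OF T])
    finally show "norm T \<le> K" .
  qed
  have cF: "closed F"
  proof -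
    have "F = (\<Inter>i. {T. norm (T *v c i) \<le> 1})" unfolding F_def by auto
    moreover have "closed {T::real^'k^'k. norm (T *v c i) \<le> 1}" for i
      by (rule closed_Collect_le) (intro continuous_intros cont_mv)+
    ultimately show ?thesis by auto
  qed
  have compF: "compact F" using bF cF by (simp add: compact_eq_bounded_closed)
  define t where "t = 1 / (1 + (\<Sum>i\<in>UNIV. norm (c i)))"
  have tpos: "t > 0" unfolding t_def by (simp add: add_pos_nonneg sum_nonneg)
  define T1 :: "real^'k^'k" where "T1 = (\<chi> r s. if r = s then t else 0)"
  have T1v: "T1 *v x = t *\<^sub>R x" for x unfolding T1_def using diag_mult[of "\<lambda>_. t" x] by (simp add: vec_eq_iff)
  have T1F: "T1 \<in> F" unfolding F_def
  proof (intro CollectI allI)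
    fix i
    have "norm (c i) \<le> (\<Sum>i\<in>UNIV. norm (c i))" by (rule member_le_sum) auto
    hence "t * norm (c i) \<le> 1" unfolding t_def
      by (simp add: divide_le_eq add_pos_nonneg sum_nonneg)
    thus "norm (T1 *v c i) \<le> 1" using tpos by (simp add: T1v)
  qed
  have dT1: "\<bar>det T1\<bar> > 0" unfolding T1_def using diag_det[where d="\<lambda>_. t" and 'k='k] tpos by simp
  obtain T0 where T0F: "T0 \<in> F" and T0max: "\<And>T. T \<in> F \<Longrightarrow> \<bar>det T\<bar> \<le> \<bar>det T0\<bar>"
    using continuous_attains_sup[OF compF _ cont_det] T1F by blast
  have dT0: "\<bar>det T0\<bar> > 0" using T0max[OF T1F] dT1 by linarith
  have "invertible T0" using dT0 by (simp add: invertible_det_nz)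
  then obtain N where N: "N ** T0 = mat 1" unfolding invertible_def by blast
  define a' where "a' = (\<lambda>i. T0 *v c i)"
  define b' where "b' = (\<lambda>j. transpose N *v b j)"
  have ab: "a' i \<bullet> b' j = M $ i $ j" for i j
  proof -
    have "a' i \<bullet> b' j = (a' i v* transpose N) \<bullet> b j" unfolding b'_def by (rule dot_lmul_matrix[symmetric])
    also have "a' i v* transpose N = c i" unfolding a'_def
      by (simp add: matrix_vector_mul_assoc N)
    finally show ?thesis by (simp add: Mc)
  qed
  have P: "\<bar>det S\<bar> \<le> 1" if "\<forall>i. norm (S *v a' i) \<le> 1" for S :: "real^'k^'k"
  proof -
    have "S ** T0 \<in> F" using that unfolding F_def a'_def by (simp add: matrix_vector_mul_assoc)
    hence "\<bar>det S\<bar> * \<bar>det T0\<bar> \<le> 1 * \<bar>det T0\<bar>" using T0max[of "S ** T0"] by (simp add: det_mul abs_mult)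
    thus ?thesis using dT0 by simp
  qed
  have na: "norm (a' i) \<le> 1" for i using T0F unfolding F_def a'_def by simp
  have nb: "norm (b' j) \<le> sqrt n * m" for j
  proof (cases "b' j = 0")
    case True thus ?thesis using mpos n1 by simp
  next
    case False
    hence nz: "norm (b' j) > 0" by simp
    define u where "u = b' j /\<^sub>R norm (b' j)"
    have "norm u = 1" unfolding u_def using nz by simp
    then obtain i where i: "(a' i \<bullet> u)^2 \<ge> 1 / n" using key_gen[of a' u] P na unfolding n_def by blast
    have "(a' i \<bullet> u)^2 = (M $ i $ j)^2 / (norm (b' j))^2"
      unfolding u_def by (simp add: ab power_divide power_mult_distrib field_simps)
    hence "(norm (b' j))^2 \<le> n * (M $ i $ j)^2" using i nz n1 by (simp add: field_simps)
    also have "\<dots> \<le> n * m^2"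
    proof -
      have "(M$i$j)^2 = \<bar>M$i$j\<bar>^2" by simp
      also have "\<dots> \<le> m^2" by (rule power_mono[OF mge[of i j] abs_ge_zero])
      finally show ?thesis using n1 by (intro mult_left_mono) auto
    qed
    also have "\<dots> = (sqrt n * m)^2" using n1 by (simp add: power_mult_distrib)
    finally have "(norm (b' j))^2 \<le> (sqrt n * m)^2" .
    moreover have "0 \<le> sqrt n * m" using mpos n1 by simp
    ultimately show ?thesis by (rule power2_le_imp_le)
  qed
  define lam where "lam = n powr (1/4) * sqrt m"
  have lpos: "lam > 0" unfolding lam_def using mpos n1 by simp
  have l2: "lam^2 = sqrt n * m"
  proof -
    have "(n powr (1/4))^2 = n powr (1/2)" using n1 by (simp add: power2_eq_square flip: powr_add)
    thus ?thesis unfolding lam_def using mpos n1 by (simp add: power_mult_distrib powr_half_sqrt)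
  qed
  define A :: "real^'p^'k" where "A = (\<chi> r i. lam * a' i $ r)"
  define B :: "real^'q^'k" where "B = (\<chi> r j. b' j $ r / lam)"
  have cA: "column i A = lam *\<^sub>R a' i" for i by (simp add: A_def column_def vec_eq_iff)
  have cB: "column j B = (1/lam) *\<^sub>R b' j" for j by (simp add: B_def column_def vec_eq_iff)
  have "M = transpose A ** B"
  proof -
    have "(transpose A ** B) $ i $ j = a' i \<bullet> b' j" for i j
      using lpos by (simp add: A_def B_def matrix_matrix_mult_def transpose_def inner_vec_def)
    thus ?thesis by (simp add: vec_eq_iff ab)
  qed
  moreover have "norm (column j A) \<le> lam" for j
    using na[of j] lpos by (simp add: cA mult_left_le)
  moreover have "norm (column j B) \<le> lam" for j
  proof -
    have "norm (column j B) = norm (b' j) / lam" using lpos by (simp add: cB)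
    also have "\<dots> \<le> lam^2 / lam" unfolding l2 using nb[of j] lpos by (simp add: divide_right_mono)
    also have "\<dots> = lam" by (simp add: power2_eq_square)
    finally show ?thesis .
  qed
  ultimately show ?thesis unfolding lam_def m_def n_def by blast
qed

end
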